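(* Let $s\ge 1$, integers $0=m_0<m_1<\cdots<m_s$ and $n_0>n_1>\cdots>n_s=0$, let $\mathsf T$ be the initial segment determined by $\bm E=(y^{n_0},x^{m_1}y^{n_1},\dots,x^{m_{s-1}}y^{n_{s-1}},x^{m_s})$, and let $\mathsf S=(\{0,\dots,m_s-1\}\times\{0,\dots,n_0-1\})\setminus\mathsf T$. For $i=1,\dots,s-1$ let $h_i=2^{\mathrm{val}_2(i)}$, $\ell_i=\min(h_i,s-i)$ and $$\mathsf R_i=\{m_i,\dots,m_{i+\ell_i}-1\}\times\{n_i,\dots,n_{i-h_i}-1\}.$$ Then $i+\ell_i\le s$ and $i-h_i\ge 0$ for all $i$, the rectangles $\mathsf R_1,\dots,\mathsf R_{s-1}$ are pairwise disjoint, and their union is exactly $\mathsf S$.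
   Context: $\mathrm{val}_2(i)$ denotes the $2$-adic valuation of the positive integer $i$. The initial segment determined by a list of monomials $\bm E$ is the set of $(u,v)\in\mathbb N^2$ such that $x^uy^v$ is not in the monomial ideal generated by $\bm E$; here $\mathsf T=\{(u,v): \text{for the unique } k \text{ with } m_k\le u<m_{k+1},\ v<n_k\}$ restricted to $u<m_s$. *)

theory Defs
  imports Main "HOL-Computational_Algebra.Primes"
begin

definition val2 :: "nat \<Rightarrow> nat" where
  "val2 i = multiplicity (2::nat) i"

text \<open>Initial segment determined by E = (x^(m k) y^(n k))_(k=0..s): exponent pairs (u,v)
  such that x^u y^v is not divisible by any generator x^(m k) y^(n k), k = 0..s.\<close>
definition initSeg :: "nat \<Rightarrow> (nat \<Rightarrow> nat) \<Rightarrow> (nat \<Rightarrow> nat) \<Rightarrow> (nat \<times> nat) set" where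
  "initSeg s m n = {(u, v). \<not> (\<exists>k\<le>s. m k \<le> u \<and> n k \<le> v)}"

definition Sset :: "nat \<Rightarrow> (nat \<Rightarrow> nat) \<Rightarrow> (nat \<Rightarrow> nat) \<Rightarrow> (nat \<times> nat) set" where
  "Sset s m n = ({0..<m s} \<times> {0..<n 0}) - initSeg s m n"

definition hh :: "nat \<Rightarrow> nat" where
  "hh i = 2 ^ val2 i"

definition ell :: "nat \<Rightarrow> nat \<Rightarrow> nat" where
  "ell s i = min (hh i) (s - i)"

definition Rect :: "nat \<Rightarrow> (nat \<Rightarrow> nat) \<Rightarrow> (nat \<Rightarrow> nat) \<Rightarrow> nat \<Rightarrow> (nat \<times> nat) set" where
  "Rect s m n i = {m i ..< m (i + ell s i)} \<times> {n i ..< n (i - hh i)}"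

end

theory Submission imports Defs begin

lemma hh_dvd: "hh i dvd i"
  unfolding hh_def val2_def by (rule multiplicity_dvd)

lemma hh_pos: "hh i > 0" unfolding hh_def by simp

lemma hh_le: "0 < i \<Longrightarrow> hh i \<le> i"
  using hh_dvd by (simp add: dvd_imp_le)

lemma hh_odd: "0 < i \<Longrightarrow> odd (i div hh i)"
  unfolding hh_def val2_def using multiplicity_decompose[of i "2::nat"] by simp

lemma val_ge: "0 < (i::nat) \<Longrightarrow> 2^k dvd i \<Longrightarrow> k \<le> val2 i"
  unfolding val2_def by (rule multiplicity_geI) auto

lemma hh_mono: "val2 i \<le> val2 i' \<Longrightarrow> hh i dvd hh i'"
  unfolding hh_def by (simp add: le_imp_power_dvd)

definition good :: "nat \<Rightarrow> nat \<Rightarrow> nat \<Rightarrow> bool" where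
  "good t j i \<longleftrightarrow> t \<le> i \<and> i \<le> j \<and> j < i + hh i \<and> i - hh i < t"

lemma next_mult:
  assumes "0 < i"
  shows "val2 i < val2 (i + hh i)"
proof -
  let ?h = "hh i"
  define q where "q = i div ?h"
  have q: "i = ?h * q" unfolding q_def using hh_dvd[of i] by simp
  have "odd q" using hh_odd[OF assms] q_def by simp
  then have "even (q+1)" by simp
  then obtain r where r: "q + 1 = 2*r" by blast
  have "i + ?h = ?h * (q + 1)" using q by simp
  also have "\<dots> = 2^(Suc (val2 i)) * r" using r unfolding hh_def by simp
  finally have "i + ?h = 2^(Suc (val2 i)) * r" .
  then have "2^(Suc (val2 i)) dvd i + ?h" by simp
  then show ?thesis using val_ge[of "i + ?h"] assms by fastforce
qed

lemma prev_mult: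
  assumes "0 < i" "hh i < i"
  shows "val2 i < val2 (i - hh i)"
proof -
  let ?h = "hh i"
  define q where "q = i div ?h"
  have q: "i = ?h * q" unfolding q_def using hh_dvd[of i] by simp
  have "odd q" using hh_odd[OF assms(1)] q_def by simp
  then obtain r where r: "q = 2*r + 1" using oddE by blast
  then have "i - ?h = 2^(Suc (val2 i)) * r" using q unfolding hh_def by (simp add: algebra_simps)
  then have "2^(Suc (val2 i)) dvd i - ?h" by simp
  then show ?thesis using val_ge[of "i - ?h"] assms by fastforce
qed

lemma good_ex:
  assumes "1 \<le> t" "t \<le> j"
  shows "\<exists>i. good t j i"
proof -
  let ?A = "{t..j}"
  have fin: "finite (val2 ` ?A)" and ne: "val2 ` ?A \<noteq> {}" using assms by auto
  obtain i where i: "i \<in> ?A" "val2 i = Max (val2 ` ?A)"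
    using Max_in[OF fin ne] by auto
  have mx: "\<And>k. k \<in> ?A \<Longrightarrow> val2 k \<le> val2 i" using i fin by simp
  have ipos: "0 < i" using i assms by auto
  have "j < i + hh i"
  proof (rule ccontr)
    assume "\<not> ?thesis"
    then have "i + hh i \<in> ?A" using i by auto
    then show False using mx next_mult[OF ipos] by fastforce
  qed
  moreover have "i - hh i < t"
  proof (rule ccontr)
    assume a: "\<not> ?thesis"
    then have "hh i < i" using assms by linarith
    moreover have "i - hh i \<in> ?A" using i a by auto
    ultimately show False using mx prev_mult[OF ipos] by fastforce
  qed
  ultimately show ?thesis using i unfolding good_def by auto
qed

lemma good_uniq_aux:
  assumes "good t j i" "good t j i'" "val2 i \<le> val2 i'"
  shows "i = i'"
proof -
  let ?h = "hh i"
  have "?h dvd i'" using hh_mono[OF assms(3)] hh_dvd dvd_trans by blast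
  then obtain q' where q': "i' = ?h * q'" by blast
  obtain q where q: "i = ?h * q" using hh_dvd by blast
  have hp: "?h > 0" by (rule hh_pos)
  have b1: "i - ?h < i'" "i' < i + ?h" using assms unfolding good_def by auto
  have "q' = q"
  proof (rule ccontr)
    assume "q' \<noteq> q"
    then consider "q' < q" | "q < q'" by linarith
    then show False
    proof cases
      case 1
      then have "?h * q' \<le> ?h * (q - 1)" by (intro mult_le_mono2) simp
      then have "i' \<le> i - ?h" using q q' by (simp add: right_diff_distrib')
      then show False using b1 by linarith
    next
      case 2
      then have "?h * (q+1) \<le> ?h * q'" by (intro mult_le_mono2) simp
      then have "i + ?h \<le> i'" using q q' by (simp add: algebra_simps)
      then show False using b1 by linarith
    qed
  qed
  then show ?thesis using q q' by simp
qed

lemma good_uniq: "good t j i \<Longrightarrow> good t j i' \<Longrightarrow> i = i'"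
  using good_uniq_aux[of t j i i'] good_uniq_aux[of t j i' i] by (cases "val2 i \<le> val2 i'") auto

lemma col_ex:
  "(\<And>k. k < b \<Longrightarrow> m k < m (Suc k)) \<Longrightarrow> m 0 \<le> (u::nat) \<Longrightarrow> u < m b \<Longrightarrow> \<exists>j<b. m j \<le> u \<and> u < m (Suc j)"
proof (induction b)
  case 0 then show ?case by simp
next
  case (Suc b)
  show ?case
  proof (cases "u < m b")
    case True then show ?thesis using Suc by (metis less_SucI less_Suc_eq)
  next
    case False then show ?thesis using Suc by auto
  qed
qed

lemma row_ex:
  "(\<And>k. k < b \<Longrightarrow> n (Suc k) < n k) \<Longrightarrow> n b \<le> (v::nat) \<Longrightarrow> v < n 0 \<Longrightarrow> \<exists>t<b. n (Suc t) \<le> v \<and> v < n t"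
proof (induction b)
  case 0 then show ?case by simp
next
  case (Suc b)
  show ?case
  proof (cases "n b \<le> v")
    case True then show ?thesis using Suc by (metis less_SucI less_Suc_eq)
  next
    case False then show ?thesis using Suc by auto
  qed
qed

lemma smono: "(\<And>k. k < s \<Longrightarrow> m k < m (Suc k)) \<Longrightarrow> a < b \<Longrightarrow> b \<le> s \<Longrightarrow> (m a :: nat) < m b"
proof (induction b)
  case 0 then show ?case by simp
next
  case (Suc b)
  then show ?case by (metis Suc_leD Suc_le_lessD less_Suc_eq order.strict_trans)
qed

lemma santi: "(\<And>k. k < s \<Longrightarrow> n (Suc k) < n k) \<Longrightarrow> a < b \<Longrightarrow> b \<le> s \<Longrightarrow> (n b :: nat) < n a"
proof (induction b)
  case 0 then show ?case by simp
next
  case (Suc b)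
  then show ?case by (metis Suc_leD Suc_le_lessD less_Suc_eq order.strict_trans)
qed

theorem mainTheorem3:
  fixes s :: nat and m n :: "nat \<Rightarrow> nat"
  assumes "s \<ge> 1"
    and "m 0 = 0"
    and "\<And>k. k < s \<Longrightarrow> m k < m (Suc k)"
    and "\<And>k. k < s \<Longrightarrow> n (Suc k) < n k"
    and "n s = 0"
  shows "(\<forall>i\<in>{1..<s}. i + ell s i \<le> s \<and> hh i \<le> i)
    \<and> (\<forall>i\<in>{1..<s}. \<forall>j\<in>{1..<s}. i \<noteq> j \<longrightarrow> Rect s m n i \<inter> Rect s m n j = {})
    \<and> (\<Union>i\<in>{1..<s}. Rect s m n i) = Sset s m n"
proof -
  have mlt: "\<And>a b. a \<le> s \<Longrightarrow> b \<le> s \<Longrightarrow> m a < m b \<longleftrightarrow> a < b"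
  proof -
    fix a b :: nat assume ab: "a \<le> s" "b \<le> s"
    show "m a < m b \<longleftrightarrow> a < b"
    proof
      assume "a < b" then show "m a < m b" using smono[of s m, OF assms(3)] ab by blast
    next
      assume h: "m a < m b"
      show "a < b"
      proof (rule ccontr)
        assume "\<not> a < b"
        then have "b < a \<or> b = a" by linarith
        then show False using smono[of s m b a, OF assms(3)] ab h by auto
      qed
    qed
  qed
  have mle: "\<And>a b. a \<le> s \<Longrightarrow> b \<le> s \<Longrightarrow> m a \<le> m b \<longleftrightarrow> a \<le> b"
    using mlt by (meson not_le)
  have nlt: "\<And>a b. a \<le> s \<Longrightarrow> b \<le> s \<Longrightarrow> n b < n a \<longleftrightarrow> a < b"
  proof -
    fix a b :: nat assume ab: "a \<le> s" "b \<le> s"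
    show "n b < n a \<longleftrightarrow> a < b"
    proof
      assume "a < b" then show "n b < n a" using santi[of s n, OF assms(4)] ab by blast
    next
      assume h: "n b < n a"
      show "a < b"
      proof (rule ccontr)
        assume "\<not> a < b"
        then have "b < a \<or> b = a" by linarith
        then show False using santi[of s n b a, OF assms(4)] ab h by auto
      qed
    qed
  qed
  have nle: "\<And>a b. a \<le> s \<Longrightarrow> b \<le> s \<Longrightarrow> n b \<le> n a \<longleftrightarrow> a \<le> b"
    using nlt by (meson not_le)
  have P1: "\<forall>i\<in>{1..<s}. i + ell s i \<le> s \<and> hh i \<le> i"
    using hh_le unfolding ell_def by auto
  have sub: "Rect s m n i \<subseteq> Sset s m n" if i: "i \<in> {1..<s}" for i
  proof
    fix x assume x: "x \<in> Rect s m n i"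
    obtain u v where uv: "x = (u,v)" by force
    have l: "i + ell s i \<le> s" "hh i \<le> i" using P1 i by auto
    have "u < m s" using x uv l mle[of "i + ell s i" s] unfolding Rect_def by auto
    moreover have "v < n 0"
    proof -
      have "i - hh i \<le> s" using i by auto
      then have "n (i - hh i) \<le> n 0" using nle[of 0 "i - hh i"] by simp
      then show ?thesis using x uv unfolding Rect_def by auto
    qed
    moreover have "\<not> (u,v) \<in> initSeg s m n"
      using x uv i unfolding Rect_def initSeg_def by auto
    ultimately show "x \<in> Sset s m n" unfolding Sset_def uv by auto
  qed
  have cell: "\<exists>j t. j < s \<and> t < s \<and> m j \<le> u \<and> u < m (Suc j) \<and> n (Suc t) \<le> v \<and> v < n t"
    if "u < m s" "v < n 0" for u v
    using col_ex[of s m u, OF assms(3)] row_ex[of s n v, OF assms(4)] that assms(2,5) by fastforce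
  have rect_good: "good (Suc t) j i"
    if i: "i \<in> {1..<s}" and r: "(u,v) \<in> Rect s m n i" and c: "j < s" "t < s" "m j \<le> u" "u < m (Suc j)"
       "n (Suc t) \<le> v" "v < n t" for i u v j t
  proof -
    have l: "i + ell s i \<le> s" "hh i \<le> i" using P1 i by auto
    have iS: "i \<le> s" using i by auto
    have r': "m i \<le> u" "u < m (i + ell s i)" "n i \<le> v" "v < n (i - hh i)" using r unfolding Rect_def by auto
    have "m i < m (Suc j)" using r' c by linarith
    then have 1: "i \<le> j" using mlt[of i "Suc j"] c iS by simp
    have "m j < m (i + ell s i)" using r' c by linarith
    then have "j < i + ell s i" using mlt[of j "i + ell s i"] l c by simp
    then have 2: "j < i + hh i" unfolding ell_def by simp
    have "n t > n i" using r' c by linarith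
    then have 3: "t < i" using nlt[of t i] c iS by simp
    have "n (Suc t) < n (i - hh i)" using r' c by linarith
    then have 4: "i - hh i < Suc t" using nlt[of "i - hh i" "Suc t"] l c iS by simp
    show ?thesis unfolding good_def using 1 2 3 4 by auto
  qed
  have P2: "\<forall>i\<in>{1..<s}. \<forall>j\<in>{1..<s}. i \<noteq> j \<longrightarrow> Rect s m n i \<inter> Rect s m n j = {}"
  proof (intro ballI impI)
    fix i i' assume i: "i \<in> {1..<s}" and i': "i' \<in> {1..<s}" and ne: "i \<noteq> i'"
    show "Rect s m n i \<inter> Rect s m n i' = {}"
    proof (rule ccontr)
      assume "\<not> ?thesis"
      then obtain u v where uv: "(u,v) \<in> Rect s m n i" "(u,v) \<in> Rect s m n i'" by auto
      then have "(u,v) \<in> Sset s m n" using sub[OF i] by auto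
      then have "u < m s" "v < n 0" unfolding Sset_def by auto
      then obtain j t where c: "j < s" "t < s" "m j \<le> u" "u < m (Suc j)" "n (Suc t) \<le> v" "v < n t"
        using cell by blast
      have "good (Suc t) j i" "good (Suc t) j i'"
        using rect_good[OF i uv(1) c] rect_good[OF i' uv(2) c] by auto
      then show False using good_uniq ne by blast
    qed
  qed
  have P3: "(\<Union>i\<in>{1..<s}. Rect s m n i) = Sset s m n"
  proof
    show "(\<Union>i\<in>{1..<s}. Rect s m n i) \<subseteq> Sset s m n" using sub by blast
  next
    show "Sset s m n \<subseteq> (\<Union>i\<in>{1..<s}. Rect s m n i)"
    proof
      fix x assume x: "x \<in> Sset s m n"
      obtain u v where uv: "x = (u,v)" by force
      have b: "u < m s" "v < n 0" and ni: "\<exists>k\<le>s. m k \<le> u \<and> n k \<le> v"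
        using x uv unfolding Sset_def initSeg_def by auto
      obtain j t where c: "j < s" "t < s" "m j \<le> u" "u < m (Suc j)" "n (Suc t) \<le> v" "v < n t"
        using cell[OF b] by blast
      obtain k where k: "k \<le> s" "m k \<le> u" "n k \<le> v" using ni by blast
      have "m k < m (Suc j)" using k c by linarith
      then have kj: "k \<le> j" using mlt[of k "Suc j"] c k by simp
      have "n k < n t" using k c by linarith
      then have "t < k" using nlt[of t k] c k by simp
      then have tj: "Suc t \<le> j" using kj by simp
      obtain i where g: "good (Suc t) j i" using good_ex[of "Suc t" j] tj by auto
      then have g': "Suc t \<le> i" "i \<le> j" "j < i + hh i" "i - hh i < Suc t" unfolding good_def by auto
      have i: "i \<in> {1..<s}" using g' c by auto
      have l: "hh i \<le> i" using P1 i by auto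
      have e: "j < i + ell s i" using g' c unfolding ell_def by auto
      have "m (Suc j) \<le> m (i + ell s i)" using mle[of "Suc j" "i + ell s i"] e P1 i by auto
      moreover have "m i \<le> m j" using mle[of i j] g' c by auto
      moreover have "n i \<le> n (Suc t)" using nle[of "Suc t" i] g' c by auto
      moreover have "n t \<le> n (i - hh i)" using nle[of "i - hh i" t] g' c l by auto
      ultimately have "(u,v) \<in> Rect s m n i" using c unfolding Rect_def by auto
      then show "x \<in> (\<Union>i\<in>{1..<s}. Rect s m n i)" using i uv by blast
    qed
  qed
  show ?thesis using P1 P2 P3 by blast
qed

end
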